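(* Let $a>0$ and let $\omega$ solve the linear equation $i\omega_t+\omega_{xx}+\frac{a^2}{2t}(\omega+\overline\omega)=0$ for $t\ge1$, and let $S(t,1)$ denote the (real-linear) solution operator of this equation from time $1$ to time $t$. Let $J(t)=x+2it\partial_x$. Then for $\xi\ne0$ the evolution of $J(t)\omega(t)$ is described by $$J(t)\omega(t)=S(t,1)J(1)\omega(1)+S(t,1)\mathcal F^{-1}\left(\frac{2a^2}\xi\widehat{\Re\omega}(1,\xi)\right)-\mathcal F^{-1}\left(\frac{2a^2}\xi\widehat{\Re\omega}(t,\xi)\right),$$ understood as equality of Fourier transforms at every frequency $\xi\ne0$.
   Context: $\mathcal F$ (or $\hat{\ }$) denotes the Fourier transform in $x$, $\hat f(\xi)=\int e^{-ix\xi}f(x)dx$, and $\mathcal F^{-1}$ its inverse; $\widehat{\Re\omega}(t,\xi)$ is the Fourier transform of the real part of $\omega(t,\cdot)$. *)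

theory Defs
  imports "HOL-Analysis.Analysis"
begin

definition fourier :: "(real \<Rightarrow> complex) \<Rightarrow> real \<Rightarrow> complex" where
  "fourier f \<xi> = (LINT x|lborel. exp (- \<i> * complex_of_real (x * \<xi>)) * f x)"

definition Jop :: "real \<Rightarrow> (real \<Rightarrow> complex) \<Rightarrow> real \<Rightarrow> complex" where
  "Jop t f x = complex_of_real x * f x + 2 * \<i> * complex_of_real t * vector_derivative f (at x)"

text \<open>The equation i w_t + w_xx + a^2/(2t) (w + conj w) = 0 written on the Fourier side
  (for v(t,xi) = F(w(t))(xi)), for t >= 1:
  i v_t(t,xi) - xi^2 v(t,xi) + a^2/(2t) (v(t,xi) + conj(v(t,-xi))) = 0.\<close>
definition solves_fourier_eq :: "real \<Rightarrow> (real \<Rightarrow> real \<Rightarrow> complex) \<Rightarrow> bool" where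
  "solves_fourier_eq a v \<longleftrightarrow>
     (\<forall>\<eta>. \<forall>s\<ge>1. \<exists>d. ((\<lambda>r. v r \<eta>) has_vector_derivative d) (at s within {1..}) \<and>
        \<i> * d - complex_of_real (\<eta>\<^sup>2) * v s \<eta>
          + complex_of_real (a\<^sup>2 / (2 * s)) * (v s \<eta> + cnj (v s (- \<eta>))) = 0)"

text \<open>Solution operator S(t,1) on the Fourier side: sol_op_F a t g = F(S(t,1) F^{-1} g).\<close>
definition sol_op_F :: "real \<Rightarrow> real \<Rightarrow> (real \<Rightarrow> complex) \<Rightarrow> real \<Rightarrow> complex" where
  "sol_op_F a t g \<xi> =
     (THE z. \<exists>v. solves_fourier_eq a v \<and> (\<forall>\<eta>. v 1 \<eta> = g \<eta>) \<and> v t \<xi> = z)"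

end

theory Submission
  imports Defs "HOL-Probability.Sinc_Integral" "HOL-Real_Asymp.Real_Asymp"
begin


lemma vd_iff:
  fixes f :: "real \<Rightarrow> complex"
  shows "(f has_vector_derivative d) (at x within S) \<longleftrightarrow>
         ((\<lambda>y. (f y - f x) / complex_of_real (y - x)) \<longlongrightarrow> d) (at x within S)"
proof -
  have *: "(\<lambda>y. (f y - f x) / complex_of_real (y - x)) = (\<lambda>y. Complex ((Re (f y) - Re (f x)) / (y - x)) ((Im (f y) - Im (f x)) / (y - x)))"
    by (auto simp: complex_eq_iff Re_divide Im_divide power2_eq_square)
  show ?thesis
    unfolding has_vector_derivative_complex_iff has_field_derivative_iff * tendsto_complex_iff
    by simp
qed

lemma integrable_inv_sq: "integrable lborel (\<lambda>x::real. inverse (1 + x^2))"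
  using integrable_inverse_1_plus_square by (simp add: set_integrable_def einterval_eq_UNIV)

lemma integrable_decay2: "integrable lborel (\<lambda>x::real. C / (1 + \<bar>x\<bar>)^2)"
proof -
  have "integrable lborel (\<lambda>x::real. \<bar>C\<bar> * inverse (1 + x^2))"
    using integrable_inv_sq by simp
  then show ?thesis
  proof (rule Bochner_Integration.integrable_bound)
    show "AE x in lborel. norm (C / (1 + \<bar>x\<bar>)^2) \<le> norm (\<bar>C\<bar> * inverse (1 + x^2))"
    proof (rule AE_I2)
      fix x :: real
      have "1 + x^2 \<le> (1 + \<bar>x\<bar>)^2" by (simp add: power2_eq_square algebra_simps)
      then have "inverse ((1 + \<bar>x\<bar>)^2) \<le> inverse (1 + x^2)"
        by (intro le_imp_inverse_le) (auto simp: add_pos_nonneg)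
      then show "norm (C / (1 + \<bar>x\<bar>)^2) \<le> norm (\<bar>C\<bar> * inverse (1 + x^2))"
        by (simp add: divide_inverse abs_mult mult_left_mono add_pos_nonneg)
    qed
  qed measurable
qed


lemma mvt_vd:
  fixes f :: "real \<Rightarrow> 'a::real_normed_vector"
  assumes "\<And>r. r \<in> {a..b} \<Longrightarrow> (f has_vector_derivative f' r) (at r within {a..b})"
    and "\<And>r. r \<in> {a..b} \<Longrightarrow> norm (f' r) \<le> B"
    and "x \<in> {a..b}" "y \<in> {a..b}"
  shows "norm (f x - f y) \<le> B * \<bar>x - y\<bar>"
proof -
  have "norm (f x - f y) \<le> B * norm (x - y)"
  proof (rule differentiable_bound[where f' = "\<lambda>r h. h *\<^sub>R f' r"])
    show "convex {a..b}" by simp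
    show "(f has_derivative (\<lambda>h. h *\<^sub>R f' r)) (at r within {a..b})" if "r \<in> {a..b}" for r
      using assms(1)[OF that] by (simp add: has_vector_derivative_def)
    show "onorm (\<lambda>h. h *\<^sub>R f' r) \<le> B" if "r \<in> {a..b}" for r
      using assms(2)[OF that] by (simp add: onorm_scaleR_left_lemma onorm_scaleR_left bounded_linear_ident onorm_id)
  qed (use assms in auto)
  then show ?thesis by simp
qed

lemma param_deriv:
  fixes g gt :: "real \<Rightarrow> real \<Rightarrow> complex" and B :: "real \<Rightarrow> real"
  assumes s: "s \<ge> 1"
    and der: "\<And>r x. r \<ge> 1 \<Longrightarrow> ((\<lambda>r. g r x) has_vector_derivative gt r x) (at r within {1..})"
    and meas: "\<And>r. r \<ge> 1 \<Longrightarrow> g r \<in> borel_measurable lborel"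
    and meast: "gt s \<in> borel_measurable lborel"
    and bound: "\<And>r x. 1 \<le> r \<Longrightarrow> r \<le> s + 1 \<Longrightarrow> norm (gt r x) \<le> B x"
    and intB: "integrable lborel B"
    and intg: "\<And>r. r \<ge> 1 \<Longrightarrow> integrable lborel (g r)"
  shows "((\<lambda>r. \<integral>x. g r x \<partial>lborel) has_vector_derivative (\<integral>x. gt s x \<partial>lborel)) (at s within {1..})"
proof -
  have atw: "at s within {1..} = at s within {1..s+1}"
    by (rule at_within_nhd[where S="{..<s+1}"]) auto
  show ?thesis
    unfolding vd_iff atw tendsto_at_iff_sequentially
  proof (intro allI impI)
    fix X :: "nat \<Rightarrow> real"
    assume X: "\<forall>i. X i \<in> {1..s+1} - {s}" and Xl: "X \<longlonglongrightarrow> s"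
    define q where "q i x = (g (X i) x - g s x) / complex_of_real (X i - s)" for i x
    have Xi: "1 \<le> X i" "X i \<le> s + 1" "X i \<noteq> s" for i using X by auto
    have eq: "((\<lambda>r. ((\<integral>x. g r x \<partial>lborel) - (\<integral>x. g s x \<partial>lborel)) / complex_of_real (r - s)) \<circ> X) i
        = (\<integral>x. q i x \<partial>lborel)" for i
      using intg[of "X i"] intg[of s] Xi[of i] s
      by (simp add: q_def Bochner_Integration.integral_diff)
    have "(\<lambda>i. \<integral>x. q i x \<partial>lborel) \<longlonglongrightarrow> (\<integral>x. gt s x \<partial>lborel)"
    proof (rule integral_dominated_convergence[where w=B])
      show "gt s \<in> borel_measurable lborel" by (rule meast)
      show "q i \<in> borel_measurable lborel" for i
        unfolding q_def using meas[of "X i"] meas[of s] Xi[of i] s by measurable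
      show "integrable lborel B" by (rule intB)
      show "AE x in lborel. (\<lambda>i. q i x) \<longlonglongrightarrow> gt s x"
      proof (rule AE_I2)
        fix x
        have "((\<lambda>r. (g r x - g s x) / complex_of_real (r - s)) \<longlongrightarrow> gt s x) (at s within {1..})"
          using der[OF s, of x] unfolding vd_iff .
        then have "((\<lambda>r. (g r x - g s x) / complex_of_real (r - s)) \<circ> X) \<longlonglongrightarrow> gt s x"
          unfolding tendsto_at_iff_sequentially using X Xl by auto
        then show "(\<lambda>i. q i x) \<longlonglongrightarrow> gt s x" by (simp add: q_def comp_def)
      qed
      show "AE x in lborel. norm (q i x) \<le> B x" for i
      proof (rule AE_I2)
        fix x
        let ?a = "min (X i) s" and ?b = "max (X i) s"
        have "norm (g (X i) x - g s x) \<le> B x * \<bar>X i - s\<bar>"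
        proof (rule mvt_vd[where a="?a" and b="?b" and f'="\<lambda>r. gt r x"])
          show "((\<lambda>r. g r x) has_vector_derivative gt r x) (at r within {?a..?b})" if "r \<in> {?a..?b}" for r
          proof -
            have r1: "1 \<le> r" using that Xi[of i] s by auto
            show ?thesis
              by (rule has_vector_derivative_within_subset[OF der[OF r1]]) (use Xi[of i] s in auto)
          qed
          show "norm (gt r x) \<le> B x" if "r \<in> {?a..?b}" for r
            using bound[of r x] that Xi[of i] s by auto
        qed auto
        then show "norm (q i x) \<le> B x"
          using Xi[of i] by (simp add: q_def norm_divide divide_le_eq flip: of_real_diff)
      qed
    qed
    then show "((\<lambda>r. ((\<integral>x. g r x \<partial>lborel) - (\<integral>x. g s x \<partial>lborel)) / complex_of_real (r - s)) \<circ> X) \<longlonglongrightarrow> (\<integral>x. gt s x \<partial>lborel)"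
      unfolding eq by simp
  qed
qed


abbreviation ee :: "real \<Rightarrow> real \<Rightarrow> complex" where
  "ee \<eta> x \<equiv> exp (- \<i> * complex_of_real (x * \<eta>))"

lemma norm_ee[simp]: "norm (ee \<eta> x) = 1"
  by (simp add: norm_exp_eq_Re)

lemma integrable_ee_mult:
  fixes f :: "real \<Rightarrow> complex"
  assumes "integrable lborel f"
  shows "integrable lborel (\<lambda>x. ee \<eta> x * f x)"
proof (rule Bochner_Integration.integrable_bound[OF integrable_norm[OF assms]])
  show "(\<lambda>x. ee \<eta> x * f x) \<in> borel_measurable lborel"
    using borel_measurable_integrable[OF assms] by measurable
  show "AE x in lborel. norm (ee \<eta> x * f x) \<le> norm (norm (f x))"
    by (simp add: norm_mult)
qed

lemma ibp:
  fixes f f' :: "real \<Rightarrow> complex"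
  assumes der: "\<And>x. (f has_vector_derivative f' x) (at x)"
    and cont: "\<And>x. isCont f' x"
    and intf: "integrable lborel f" and intf': "integrable lborel f'"
    and lt: "(f \<longlongrightarrow> 0) at_top" and lb: "(f \<longlongrightarrow> 0) at_bot"
  shows "(\<integral>x. ee \<eta> x * f' x \<partial>lborel) = \<i> * complex_of_real \<eta> * (\<integral>x. ee \<eta> x * f x \<partial>lborel)"
proof -
  define F where "F x = ee \<eta> x * f x" for x
  define G where "G x = ee \<eta> x * f' x - \<i> * complex_of_real \<eta> * (ee \<eta> x * f x)" for x
  have contf: "isCont f x" for x
    using der[of x] by (meson has_vector_derivative_continuous)
  have dF: "(F has_vector_derivative G x) (at x)" for x
    unfolding F_def G_def
    by (rule derivative_eq_intros der refl has_vector_derivative_real_field | simp)+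
  have intG: "integrable lborel G"
    unfolding G_def using integrable_ee_mult[OF intf] integrable_ee_mult[OF intf'] by auto
  have "(LBINT x=-\<infinity>..\<infinity>. G x) = 0 - 0"
  proof (rule interval_integral_FTC_integrable[where F=F])
    show "isCont G x" for x
      unfolding G_def using cont[of x] contf[of x] by (intro continuous_intros)
    show "set_integrable lborel (einterval (- \<infinity>) \<infinity>) G"
      using intG by (simp add: set_integrable_def einterval_eq_UNIV)
    have t: "((\<lambda>x. ee \<eta> x * f x) \<longlongrightarrow> 0) F" if "(f \<longlongrightarrow> 0) F" for F
    proof -
      have "((\<lambda>x. norm (ee \<eta> x * f x)) \<longlongrightarrow> 0) F"
        using tendsto_norm[OF that] by (simp add: norm_mult)
      then show ?thesis by (simp add: tendsto_norm_zero_iff)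
    qed
    show "((F \<circ> real_of_ereal) \<longlongrightarrow> 0) (at_right (- \<infinity>))"
      unfolding ereal_tendsto_simps F_def using t[OF lb] .
    show "((F \<circ> real_of_ereal) \<longlongrightarrow> 0) (at_left \<infinity>)"
      unfolding ereal_tendsto_simps F_def using t[OF lt] .
  qed (use dF in auto)
  then have "(\<integral>x. G x \<partial>lborel) = 0"
    by (simp add: interval_lebesgue_integral_def set_lebesgue_integral_def einterval_eq_UNIV)
  then show ?thesis
    unfolding G_def using integrable_ee_mult[OF intf] integrable_ee_mult[OF intf']
    by simp
qed


lemma meas_cont: "continuous_on UNIV (f :: real \<Rightarrow> complex) \<Longrightarrow> f \<in> borel_measurable lborel"
  using borel_measurable_continuous_onI by simp

lemma decay32: "C / (1 + \<bar>x\<bar>) ^ 3 \<le> C / (1 + \<bar>x\<bar>) ^ 2" if "C \<ge> 0" for x :: real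
proof -
  have "(1 + \<bar>x\<bar>) ^ 2 \<le> (1 + \<bar>x\<bar>) ^ 3" by (rule power_increasing) auto
  then show ?thesis using that by (intro divide_left_mono) (auto simp: add_pos_nonneg)
qed

lemma decay_x: "\<bar>x\<bar> * (C / (1 + \<bar>x\<bar>) ^ 3) \<le> C / (1 + \<bar>x\<bar>) ^ 2" if "C \<ge> 0" for x :: real
proof -
  have p: "0 < 1 + \<bar>x\<bar>" by (simp add: add_pos_nonneg)
  have "\<bar>x\<bar> * (C / (1 + \<bar>x\<bar>) ^ 3) \<le> (1 + \<bar>x\<bar>) * (C / (1 + \<bar>x\<bar>) ^ 3)"
    using that p by (intro mult_right_mono) auto
  also have "\<dots> = C / (1 + \<bar>x\<bar>) ^ 2"
  proof -
    have gen: "y * (C / y ^ 3) = C / y ^ 2" if "y > 0" for y :: real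
      using that by (simp add: divide_simps) (simp add: power3_eq_cube power2_eq_square)
    show ?thesis using gen[OF p] .
  qed
  finally show ?thesis .
qed

lemma int_decay:
  fixes f :: "real \<Rightarrow> complex"
  assumes m: "f \<in> borel_measurable lborel" and b: "\<And>x. norm (f x) \<le> C / (1 + \<bar>x\<bar>) ^ 3"
  shows "integrable lborel f" "integrable lborel (\<lambda>x. complex_of_real x * f x)"
proof -
  have C: "C \<ge> 0" using b[of 0] using norm_ge_zero[of "f 0"] by (simp del: norm_ge_zero)
  show "integrable lborel f"
    by (rule Bochner_Integration.integrable_bound[OF integrable_decay2[of C] m])
       (use b decay32[OF C] C in \<open>auto intro!: AE_I2 intro: order_trans\<close>)
  show "integrable lborel (\<lambda>x. complex_of_real x * f x)"
  proof (rule Bochner_Integration.integrable_bound[OF integrable_decay2[of C]])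
    show "(\<lambda>x. complex_of_real x * f x) \<in> borel_measurable lborel" using m by measurable
    show "AE x in lborel. norm (complex_of_real x * f x) \<le> norm (C / (1 + \<bar>x\<bar>)\<^sup>2)"
    proof (rule AE_I2)
      fix x :: real
      have "norm (complex_of_real x * f x) = \<bar>x\<bar> * norm (f x)" by (simp add: norm_mult)
      also have "\<dots> \<le> \<bar>x\<bar> * (C / (1 + \<bar>x\<bar>) ^ 3)" by (rule mult_left_mono[OF b]) auto
      also have "\<dots> \<le> C / (1 + \<bar>x\<bar>) ^ 2" by (rule decay_x[OF C])
      finally show "norm (complex_of_real x * f x) \<le> norm (C / (1 + \<bar>x\<bar>)\<^sup>2)" using C by simp
    qed
  qed
qed

lemma lim_decay:
  fixes f :: "real \<Rightarrow> complex"
  assumes b: "\<And>x. norm (f x) \<le> C / (1 + \<bar>x\<bar>) ^ 2"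
  shows "(f \<longlongrightarrow> 0) at_top" "(f \<longlongrightarrow> 0) at_bot"
proof -
  have l1: "((\<lambda>x::real. C / (1 + \<bar>x\<bar>) ^ 2) \<longlongrightarrow> 0) at_top" by real_asymp
  have l2: "((\<lambda>x::real. C / (1 + \<bar>x\<bar>) ^ 2) \<longlongrightarrow> 0) at_bot" by real_asymp
  show "(f \<longlongrightarrow> 0) at_top"
    by (rule Lim_null_comparison[OF _ l1]) (use b in auto)
  show "(f \<longlongrightarrow> 0) at_bot"
    by (rule Lim_null_comparison[OF _ l2]) (use b in auto)
qed

lemma lim_decay3:
  fixes f :: "real \<Rightarrow> complex"
  assumes b: "\<And>x. norm (f x) \<le> C / (1 + \<bar>x\<bar>) ^ 3"
  shows "(f \<longlongrightarrow> 0) at_top" "(f \<longlongrightarrow> 0) at_bot"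
    "((\<lambda>x. complex_of_real x * f x) \<longlongrightarrow> 0) at_top" "((\<lambda>x. complex_of_real x * f x) \<longlongrightarrow> 0) at_bot"
proof -
  have C: "C \<ge> 0" using b[of 0] using norm_ge_zero[of "f 0"] by (simp del: norm_ge_zero)
  have b1: "norm (f x) \<le> C / (1 + \<bar>x\<bar>) ^ 2" for x using b[of x] decay32[OF C, of x] by linarith
  have b2: "norm (complex_of_real x * f x) \<le> C / (1 + \<bar>x\<bar>) ^ 2" for x
  proof -
    have "norm (complex_of_real x * f x) = \<bar>x\<bar> * norm (f x)" by (simp add: norm_mult)
    also have "\<dots> \<le> \<bar>x\<bar> * (C / (1 + \<bar>x\<bar>) ^ 3)" by (rule mult_left_mono[OF b]) auto
    also have "\<dots> \<le> C / (1 + \<bar>x\<bar>) ^ 2" by (rule decay_x[OF C])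
    finally show ?thesis .
  qed
  show "(f \<longlongrightarrow> 0) at_top" "(f \<longlongrightarrow> 0) at_bot" using lim_decay[OF b1] by auto
  show "((\<lambda>x. complex_of_real x * f x) \<longlongrightarrow> 0) at_top" "((\<lambda>x. complex_of_real x * f x) \<longlongrightarrow> 0) at_bot"
    using lim_decay[OF b2] by auto
qed


definition cc :: "real \<Rightarrow> real \<Rightarrow> real" where
  "cc a s = a\<^sup>2 / (2 * max 1 s)"

definition Mop :: "real \<Rightarrow> real \<Rightarrow> real \<Rightarrow> complex \<times> complex \<Rightarrow> complex \<times> complex" where
  "Mop a \<eta> s X = (- \<i> * complex_of_real (\<eta>\<^sup>2) * fst X + \<i> * complex_of_real (cc a s) * (fst X + cnj (snd X)),
                   - \<i> * complex_of_real (\<eta>\<^sup>2) * snd X + \<i> * complex_of_real (cc a s) * (snd X + cnj (fst X)))"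

lemma cc_nonneg: "0 \<le> cc a s" by (simp add: cc_def)
lemma cc_le: "cc a s \<le> a\<^sup>2 / 2"
proof -
  have "a\<^sup>2 / max 1 s \<le> a\<^sup>2 / 1" by (rule divide_left_mono) auto
  then show ?thesis by (simp add: cc_def)
qed

lemma Mop_diff: "Mop a \<eta> s (X - Y) = Mop a \<eta> s X - Mop a \<eta> s Y"
  by (simp add: Mop_def algebra_simps)

lemma Mop_scale: "Mop a \<eta> s (r *\<^sub>R X) = r *\<^sub>R Mop a \<eta> s X"
  by (simp add: Mop_def algebra_simps scaleR_conv_of_real)

lemma Mop_norm: "norm (Mop a \<eta> s X) \<le> 2 * (\<eta>\<^sup>2 + a\<^sup>2) * norm X"
proof -
  let ?p = "fst X" and ?q = "snd X" and ?c = "cc a s"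
  have p: "norm ?p \<le> norm X" and q: "norm ?q \<le> norm X"
    by (metis norm_fst_le prod.collapse, metis norm_snd_le prod.collapse)
  have c: "0 \<le> ?c" "?c \<le> a\<^sup>2 / 2" by (rule cc_nonneg cc_le)+
  have b1: "norm (- \<i> * complex_of_real (\<eta>\<^sup>2) * ?p + \<i> * complex_of_real ?c * (?p + cnj ?q))
      \<le> \<eta>\<^sup>2 * norm X + ?c * (norm X + norm X)"
  proof -
    have "norm (- \<i> * complex_of_real (\<eta>\<^sup>2) * ?p + \<i> * complex_of_real ?c * (?p + cnj ?q))
        \<le> norm (- \<i> * complex_of_real (\<eta>\<^sup>2) * ?p) + norm (\<i> * complex_of_real ?c * (?p + cnj ?q))"
      by (rule norm_triangle_ineq)
    also have "\<dots> \<le> \<eta>\<^sup>2 * norm ?p + ?c * (norm ?p + norm ?q)"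
      using c mult_left_mono[OF norm_triangle_ineq[of ?p "cnj ?q"], of ?c] by (simp add: norm_mult norm_power)
    also have "\<dots> \<le> \<eta>\<^sup>2 * norm X + ?c * (norm X + norm X)"
      using p q c by (intro add_mono mult_left_mono) auto
    finally show ?thesis .
  qed
  have b2: "norm (- \<i> * complex_of_real (\<eta>\<^sup>2) * ?q + \<i> * complex_of_real ?c * (?q + cnj ?p))
      \<le> \<eta>\<^sup>2 * norm X + ?c * (norm X + norm X)"
  proof -
    have "norm (- \<i> * complex_of_real (\<eta>\<^sup>2) * ?q + \<i> * complex_of_real ?c * (?q + cnj ?p))
        \<le> norm (- \<i> * complex_of_real (\<eta>\<^sup>2) * ?q) + norm (\<i> * complex_of_real ?c * (?q + cnj ?p))"
      by (rule norm_triangle_ineq)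
    also have "\<dots> \<le> \<eta>\<^sup>2 * norm ?q + ?c * (norm ?q + norm ?p)"
      using c mult_left_mono[OF norm_triangle_ineq[of ?q "cnj ?p"], of ?c] by (simp add: norm_mult norm_power)
    also have "\<dots> \<le> \<eta>\<^sup>2 * norm X + ?c * (norm X + norm X)"
      using p q c by (intro add_mono mult_left_mono) auto
    finally show ?thesis .
  qed
  have "norm (Mop a \<eta> s X) \<le> norm (fst (Mop a \<eta> s X)) + norm (snd (Mop a \<eta> s X))"
    by (metis norm_Pair_le prod.collapse)
  also have "\<dots> \<le> 2 * (\<eta>\<^sup>2 * norm X + ?c * (norm X + norm X))"
    using b1 b2 by (simp add: Mop_def)
  also have "\<dots> \<le> 2 * (\<eta>\<^sup>2 + a\<^sup>2) * norm X"
  proof -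
    have "?c * (norm X + norm X) \<le> a\<^sup>2 * norm X"
      using c by (simp add: mult_right_mono[of ?c "a\<^sup>2/2" "2 * norm X", simplified] )
    then show ?thesis by (simp add: algebra_simps)
  qed
  finally show ?thesis .
qed

lemma cont_cc: "continuous_on S (cc a)"
  unfolding cc_def by (intro continuous_intros) auto

lemma cont_Mop: "continuous_on S Z \<Longrightarrow> continuous_on S (\<lambda>u. Mop a \<eta> u (Z u))"
  unfolding Mop_def by (intro continuous_intros cont_cc)


lemma int_cont_max:
  fixes g :: "real \<Rightarrow> 'a::banach"
  assumes "continuous_on UNIV g"
  shows "continuous_on UNIV (\<lambda>t. integral {1..max 1 t} g)"
proof -
  have "isCont (\<lambda>t. integral {1..max 1 t} g) t0" for t0
  proof -
    define T where "T = max 1 t0 + 1"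
    have c1: "continuous_on {1..T} (\<lambda>x. integral {1..x} g)"
      by (rule indefinite_integral_continuous_1, rule integrable_continuous_interval,
          rule continuous_on_subset[OF assms]) auto
    have c0: "continuous_on {..T} (\<lambda>t. max 1 t)"
      by (intro continuous_intros)
    have c2: "continuous_on {..T} (\<lambda>t. integral {1..max 1 t} g)"
      using continuous_on_compose2[OF c1 c0] T_def by (force simp: max_def)
    have "t0 \<in> interior {..T}" using T_def by auto
    then show ?thesis using continuous_on_interior[OF c2] by blast
  qed
  then show ?thesis by (simp add: continuous_at_imp_continuous_on)
qed

lemma exp_has_integral:
  fixes L t :: real
  assumes "L > 0" "t \<ge> 1"
  shows "((\<lambda>u. exp (L * (u - 1))) has_integral (exp (L * (t - 1)) - 1) / L) {1..t}"
proof -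
  have "((\<lambda>u. exp (L * (u - 1))) has_integral (exp (L * (t - 1)) / L - exp (L * (1 - 1)) / L)) {1..t}"
  proof (rule fundamental_theorem_of_calculus[of 1 t "\<lambda>u. exp (L * (u - 1)) / L" "\<lambda>u. exp (L * (u - 1))"])
    show "((\<lambda>u. exp (L * (u - 1)) / L) has_vector_derivative exp (L * (x - 1))) (at x within {1..t})" for x
    proof -
      have "((\<lambda>u. exp (L * (u - 1)) / L) has_real_derivative exp (L * (x - 1))) (at x within {1..t})"
        using assms by (auto intro!: derivative_eq_intros)
      then show ?thesis by (simp add: has_real_derivative_iff_has_vector_derivative)
    qed
  qed (use assms in auto)
  then show ?thesis by (simp add: diff_divide_distrib)
qed

lemma intbound:
  assumes W: "continuous_on UNIV W" and B: "\<And>u. norm (W u) \<le> B" and t: "t \<ge> 1" and L: "L > 0"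
  shows "norm (integral {1..t} (\<lambda>u. exp (L * (u - 1)) *\<^sub>R Mop a \<eta> u (W u)))
          \<le> 2 * (\<eta>\<^sup>2 + a\<^sup>2) * B * ((exp (L * (t - 1)) - 1) / L)"
proof -
  let ?K = "2 * (\<eta>\<^sup>2 + a\<^sup>2)"
  have "norm (integral {1..t} (\<lambda>u. exp (L * (u - 1)) *\<^sub>R Mop a \<eta> u (W u)))
      \<le> integral {1..t} (\<lambda>u. ?K * B * exp (L * (u - 1)))"
  proof (rule integral_norm_bound_integral)
    show "(\<lambda>u. exp (L * (u - 1)) *\<^sub>R Mop a \<eta> u (W u)) integrable_on {1..t}"
      by (rule integrable_continuous_interval)
         (intro continuous_intros cont_Mop continuous_on_subset[OF W], auto)
    show "(\<lambda>u. ?K * B * exp (L * (u - 1))) integrable_on {1..t}"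
      by (rule integrable_continuous_interval) (intro continuous_intros)
    fix u
    have "norm (Mop a \<eta> u (W u)) \<le> ?K * B"
      using Mop_norm[of a \<eta> u "W u"] B[of u] by (smt (verit) mult_left_mono zero_le_power2)
    then show "norm (exp (L * (u - 1)) *\<^sub>R Mop a \<eta> u (W u)) \<le> ?K * B * exp (L * (u - 1))"
      by (simp add: mult.commute)
  qed
  also have "\<dots> = ?K * B * ((exp (L * (t - 1)) - 1) / L)"
    by (rule integral_unique, rule has_integral_mult_right, rule exp_has_integral[OF L t])
  finally show ?thesis .
qed

lemma ode_exists:
  "\<exists>X. X 1 = X0 \<and> (\<forall>s\<ge>1. (X has_vector_derivative Mop a \<eta> s (X s)) (at s within {1..}))"
proof -
  define K0 where "K0 = 2 * (\<eta>\<^sup>2 + a\<^sup>2)"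
  define L where "L = 2 * K0 + 1"
  have K0: "K0 \<ge> 0" unfolding K0_def by simp
  have L: "L > 0" unfolding L_def using K0 by simp
  define c where "c = K0 / L"
  have c: "0 \<le> c" "c < 1" using K0 L unfolding c_def L_def by auto
  define H where "H Z u = exp (L * (u - 1)) *\<^sub>R Mop a \<eta> u (apply_bcontfun Z u)"
    for Z :: "real \<Rightarrow>\<^sub>C (complex \<times> complex)" and u
  define P where "P Z t = exp (- L * (max 1 t - 1)) *\<^sub>R (X0 + integral {1..max 1 t} (H Z))" for Z t
  have contH: "continuous_on UNIV (H Z)" for Z
    unfolding H_def by (intro continuous_intros cont_Mop) auto
  have key: "exp (- L * (m - 1)) * (K0 * B * ((exp (L * (m - 1)) - 1) / L)) \<le> c * B"
    if "m \<ge> 1" "B \<ge> 0" for m B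
  proof -
    have e: "exp (- L * (m - 1)) * exp (L * (m - 1)) = 1"
      by (simp only: exp_add[symmetric]) simp
    have "exp (- L * (m - 1)) * (exp (L * (m - 1)) - 1) = 1 - exp (- L * (m - 1))"
      using e by (simp only: right_diff_distrib mult_1_right)
    also have "\<dots> \<le> 1" by simp
    finally have "exp (- L * (m - 1)) * (exp (L * (m - 1)) - 1) \<le> 1" .
    then have "K0 * B / L * (exp (- L * (m - 1)) * (exp (L * (m - 1)) - 1)) \<le> K0 * B / L * 1"
      using K0 L that by (intro mult_left_mono) auto
    note le = this
    have "exp (- L * (m - 1)) * (K0 * B * ((exp (L * (m - 1)) - 1) / L))
        = K0 * B / L * (exp (- L * (m - 1)) * (exp (L * (m - 1)) - 1))"
      by (simp only: divide_inverse mult_ac)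
    also have "\<dots> \<le> K0 * B / L * 1" by (rule le)
    also have "\<dots> = c * B" by (simp add: c_def)
    finally show ?thesis .
  qed
  have Pin: "P Z \<in> bcontfun" for Z
  proof (rule bcontfun_normI)
    show "continuous_on UNIV (P Z)"
      unfolding P_def by (intro continuous_intros int_cont_max contH)
    fix t :: real
    let ?m = "max 1 t"
    have "norm (P Z t) \<le> exp (- L * (?m - 1)) * (norm X0 + norm (integral {1..?m} (H Z)))"
      by (simp add: P_def norm_triangle_ineq)
    also have "\<dots> \<le> exp (- L * (?m - 1)) * (norm X0 + K0 * norm Z * ((exp (L * (?m - 1)) - 1) / L))"
      unfolding H_def K0_def
      by (intro mult_left_mono add_left_mono intbound L) (auto intro: norm_bounded)
    also have "\<dots> \<le> norm X0 + c * norm Z"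
    proof -
      have "exp (- L * (?m - 1)) \<le> 1" using L by simp
      then have "exp (- L * (?m - 1)) * norm X0 \<le> norm X0"
        by (intro mult_left_le_one_le) auto
      then show ?thesis using key[of ?m "norm Z"] by (simp add: distrib_left)
    qed
    finally show "norm (P Z t) \<le> norm X0 + c * norm Z" .
  qed
  define \<Phi> where "\<Phi> Z = Bcontfun (P Z)" for Z
  have PhiP: "apply_bcontfun (\<Phi> Z) = P Z" for Z
    unfolding \<Phi>_def using Pin by (simp add: Bcontfun_inverse)
  have contr: "dist (\<Phi> Z1) (\<Phi> Z2) \<le> c * dist Z1 Z2" for Z1 Z2
  proof (rule dist_bound)
    fix t :: real
    let ?m = "max 1 t"
    define W where "W u = apply_bcontfun Z1 u - apply_bcontfun Z2 u" for u
    have W: "continuous_on UNIV W" unfolding W_def by (intro continuous_intros) auto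
    have WB: "norm (W u) \<le> dist Z1 Z2" for u
      unfolding W_def using dist_bounded[of Z1 u Z2] by (simp add: dist_norm)
    have ints: "integral {1..?m} (H Z1) - integral {1..?m} (H Z2)
        = integral {1..?m} (\<lambda>u. exp (L * (u - 1)) *\<^sub>R Mop a \<eta> u (W u))"
    proof -
      have "integral {1..?m} (H Z1) - integral {1..?m} (H Z2) = integral {1..?m} (\<lambda>u. H Z1 u - H Z2 u)"
        by (rule integral_diff[symmetric];
            rule integrable_continuous_interval; rule continuous_on_subset[OF contH]; simp)
      also have "\<dots> = integral {1..?m} (\<lambda>u. exp (L * (u - 1)) *\<^sub>R Mop a \<eta> u (W u))"
        by (simp add: H_def W_def Mop_diff scaleR_diff_right)
      finally show ?thesis .
    qed
    have "dist (apply_bcontfun (\<Phi> Z1) t) (apply_bcontfun (\<Phi> Z2) t)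
        = exp (- L * (?m - 1)) * norm (integral {1..?m} (H Z1) - integral {1..?m} (H Z2))"
      by (simp add: PhiP P_def dist_norm scaleR_diff_right[symmetric])
    also have "\<dots> \<le> exp (- L * (?m - 1)) * (K0 * dist Z1 Z2 * ((exp (L * (?m - 1)) - 1) / L))"
      unfolding ints K0_def by (intro mult_left_mono intbound W WB L) auto
    also have "\<dots> \<le> c * dist Z1 Z2" by (rule key) auto
    finally show "dist (apply_bcontfun (\<Phi> Z1) t) (apply_bcontfun (\<Phi> Z2) t) \<le> c * dist Z1 Z2" .
  qed
  obtain Z where Z: "\<Phi> Z = Z"
    using banach_fix_type[OF c] contr by blast
  define X where "X t = X0 + integral {1..t} (H Z)" for t
  have X1: "X 1 = X0" by (simp add: X_def)
  have ZX: "exp (L * (s - 1)) *\<^sub>R apply_bcontfun Z s = X s" if "s \<ge> 1" for s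
  proof -
    have "apply_bcontfun Z s = P Z s" using Z PhiP by metis
    moreover have "exp (L * (s - 1)) * exp (- L * (s - 1)) = 1"
      by (simp only: exp_add[symmetric]) simp
    ultimately show ?thesis using that
      by (simp add: P_def X_def max_def)
  qed
  have "(X has_vector_derivative Mop a \<eta> s (X s)) (at s within {1..})" if s: "s \<ge> 1" for s
  proof -
    have atw: "at s within {1..} = at s within {1..s+1}"
      by (rule at_within_nhd[where S="{..<s+1}"]) auto
    have "((\<lambda>u. integral {1..u} (H Z)) has_vector_derivative H Z s) (at s within {1..s+1})"
      by (rule integral_has_vector_derivative) (use s in \<open>auto intro: continuous_on_subset[OF contH]\<close>)
    then have "(X has_vector_derivative H Z s) (at s within {1..s+1})"
      unfolding X_def by (intro derivative_eq_intros) auto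
    moreover have "H Z s = Mop a \<eta> s (X s)"
      using ZX[OF s] by (simp add: H_def Mop_scale[symmetric])
    ultimately show ?thesis unfolding atw by simp
  qed
  with X1 show ?thesis by blast
qed


lemma vd_inner_self:
  fixes D :: "real \<Rightarrow> 'a::real_inner"
  assumes "(D has_vector_derivative d) (at s within S)"
  shows "((\<lambda>u. D u \<bullet> D u) has_real_derivative 2 * (D s \<bullet> d)) (at s within S)"
proof -
  have h: "(D has_derivative (\<lambda>h. h *\<^sub>R d)) (at s within S)"
    using assms by (simp add: has_vector_derivative_def)
  have "((\<lambda>u. D u \<bullet> D u) has_derivative (\<lambda>h. D s \<bullet> (h *\<^sub>R d) + (h *\<^sub>R d) \<bullet> D s)) (at s within S)"
    by (rule has_derivative_inner[OF h h])
  moreover have "(\<lambda>h. D s \<bullet> (h *\<^sub>R d) + (h *\<^sub>R d) \<bullet> D s) = (*) (2 * (D s \<bullet> d))"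
    by (auto simp: inner_commute algebra_simps)
  ultimately show ?thesis by (simp only: has_field_derivative_def)
qed

lemma ode_unique:
  assumes Y1: "\<And>s. s \<ge> 1 \<Longrightarrow> (Y1 has_vector_derivative Mop a \<eta> s (Y1 s)) (at s within {1..})"
    and Y2: "\<And>s. s \<ge> 1 \<Longrightarrow> (Y2 has_vector_derivative Mop a \<eta> s (Y2 s)) (at s within {1..})"
    and init: "Y1 1 = Y2 1" and t: "t \<ge> 1"
  shows "Y1 t = Y2 t"
proof -
  define D where "D s = Y1 s - Y2 s" for s
  define K where "K = 2 * (\<eta>\<^sup>2 + a\<^sup>2)"
  have dD: "(D has_vector_derivative Mop a \<eta> s (D s)) (at s within {1..})" if "s \<ge> 1" for s
    unfolding D_def Mop_diff by (intro derivative_intros Y1 Y2 that)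
  define g where "g s = exp (- 2 * K * s) * (D s \<bullet> D s)" for s
  have dg: "(g has_real_derivative exp (- 2 * K * s) * (2 * (D s \<bullet> Mop a \<eta> s (D s)))
                 + (- 2 * K) * exp (- 2 * K * s) * (D s \<bullet> D s)) (at s within {1..})" if "s \<ge> 1" for s
  proof -
    have e: "((\<lambda>u. exp (- 2 * K * u)) has_real_derivative (- 2 * K) * exp (- 2 * K * s)) (at s within {1..})"
      by (auto intro!: derivative_eq_intros)
    show ?thesis
      unfolding g_def using DERIV_mult[OF e vd_inner_self[OF dD[OF that]]] by (simp add: algebra_simps)
  qed
  have neg: "exp (- 2 * K * s) * (2 * (D s \<bullet> Mop a \<eta> s (D s)))
                 + (- 2 * K) * exp (- 2 * K * s) * (D s \<bullet> D s) \<le> 0" for s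
  proof -
    have "D s \<bullet> Mop a \<eta> s (D s) \<le> norm (D s) * norm (Mop a \<eta> s (D s))"
      by (rule norm_cauchy_schwarz)
    also have "\<dots> \<le> norm (D s) * (K * norm (D s))"
      by (rule mult_left_mono) (unfold K_def, rule Mop_norm, simp)
    also have "\<dots> = K * (D s \<bullet> D s)" by (simp add: power2_norm_eq_inner[symmetric] power2_eq_square)
    finally have "D s \<bullet> Mop a \<eta> s (D s) \<le> K * (D s \<bullet> D s)" .
    then have "exp (- 2 * K * s) * (2 * (D s \<bullet> Mop a \<eta> s (D s))) \<le> exp (- 2 * K * s) * (2 * (K * (D s \<bullet> D s)))"
      by (intro mult_left_mono) auto
    then show ?thesis by (simp add: algebra_simps)
  qed
  have "g t \<le> g 1"
  proof (rule DERIV_nonpos_imp_decreasing_open[OF t])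
    fix x assume x: "1 < x" "x < t"
    have atw: "at x within {1..} = at x"
    proof -
      have "{1..} \<inter> {1<..} - {x} = {1<..} - {x}" by auto
      then show ?thesis using at_within_nhd[of x "{1<..}" "{1..}" UNIV] x by auto
    qed
    show "\<exists>y. DERIV g x :> y \<and> y \<le> 0"
      using dg[of x] x neg[of x] unfolding atw by auto
  next
    show "continuous_on {1..t} g"
      unfolding continuous_on_eq_continuous_within
    proof
      fix x assume "x \<in> {1..t}"
      then have "continuous (at x within {1..}) g"
        using dg[of x] by (auto intro: DERIV_continuous)
      then show "continuous (at x within {1..t}) g"
        by (rule continuous_within_subset) auto
    qed
  qed
  moreover have "g 1 = 0" by (simp add: g_def D_def init)
  moreover have "g t \<ge> 0" by (simp add: g_def)
  ultimately have "g t = 0" by simp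
  then have "D t \<bullet> D t = 0" by (simp add: g_def)
  then show ?thesis by (simp add: D_def)
qed


lemma vd_fst: "(Y has_vector_derivative d) F \<Longrightarrow> ((\<lambda>r. fst (Y r)) has_vector_derivative fst d) F"
  unfolding has_vector_derivative_def by (drule has_derivative_fst) simp

lemma vd_snd: "(Y has_vector_derivative d) F \<Longrightarrow> ((\<lambda>r. snd (Y r)) has_vector_derivative snd d) F"
  unfolding has_vector_derivative_def by (drule has_derivative_snd) simp

lemma cc_ge1: "s \<ge> 1 \<Longrightarrow> cc a s = a\<^sup>2 / (2 * s)"
  by (simp add: cc_def)

lemma solve_i: "\<i> * d + w = 0 \<Longrightarrow> d = \<i> * w"
proof -
  assume "\<i> * d + w = 0"
  then have "w = - \<i> * d" by (simp add: algebra_simps add_eq_0_iff)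
  then show ?thesis by (simp add: algebra_simps)
qed

lemma alg1: "\<i> * (- \<i> * E * p + \<i> * C * (p + w)) - E * p + C * (p + w) = (0::complex)"
  by (simp add: algebra_simps)

lemma sol_pair:
  assumes v: "solves_fourier_eq a v" and s: "s \<ge> 1"
  shows "((\<lambda>r. (v r \<eta>, v r (- \<eta>))) has_vector_derivative Mop a \<eta> s (v s \<eta>, v s (- \<eta>))) (at s within {1..})"
proof -
  obtain d1 where d1: "((\<lambda>r. v r \<eta>) has_vector_derivative d1) (at s within {1..})"
    "\<i> * d1 - complex_of_real (\<eta>\<^sup>2) * v s \<eta>
          + complex_of_real (a\<^sup>2 / (2 * s)) * (v s \<eta> + cnj (v s (- \<eta>))) = 0"
    using v s unfolding solves_fourier_eq_def by blast
  obtain d2 where d2: "((\<lambda>r. v r (- \<eta>)) has_vector_derivative d2) (at s within {1..})"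
    "\<i> * d2 - complex_of_real ((- \<eta>)\<^sup>2) * v s (- \<eta>)
          + complex_of_real (a\<^sup>2 / (2 * s)) * (v s (- \<eta>) + cnj (v s (- (- \<eta>)))) = 0"
    using v s unfolding solves_fourier_eq_def by blast
  have e1: "d1 = fst (Mop a \<eta> s (v s \<eta>, v s (- \<eta>)))"
  proof -
    have "d1 = \<i> * (- complex_of_real (\<eta>\<^sup>2) * v s \<eta> + complex_of_real (a\<^sup>2 / (2 * s)) * (v s \<eta> + cnj (v s (- \<eta>))))"
      by (rule solve_i) (use d1(2) in \<open>simp only: diff_conv_add_uminus add.assoc power2_minus minus_minus mult_minus_left\<close>)
    then show ?thesis using s by (simp add: Mop_def cc_ge1 ring_distribs mult.assoc)
  qed
  have e2: "d2 = snd (Mop a \<eta> s (v s \<eta>, v s (- \<eta>)))"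
  proof -
    have "d2 = \<i> * (- complex_of_real (\<eta>\<^sup>2) * v s (- \<eta>) + complex_of_real (a\<^sup>2 / (2 * s)) * (v s (- \<eta>) + cnj (v s \<eta>)))"
      by (rule solve_i) (use d2(2) in \<open>simp only: diff_conv_add_uminus add.assoc power2_minus minus_minus mult_minus_left\<close>)
    then show ?thesis using s by (simp add: Mop_def cc_ge1 ring_distribs mult.assoc)
  qed
  show ?thesis
    using has_vector_derivative_Pair[OF d1(1) d2(1)] e1 e2 by simp
qed

lemma sol_unique:
  assumes "solves_fourier_eq a v1" "solves_fourier_eq a v2" "\<And>\<eta>. v1 1 \<eta> = v2 1 \<eta>" "t \<ge> 1"
  shows "v1 t \<xi> = v2 t \<xi>"
proof -
  have "(v1 t \<xi>, v1 t (- \<xi>)) = (v2 t \<xi>, v2 t (- \<xi>))"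
    by (rule ode_unique[of "\<lambda>r. (v1 r \<xi>, v1 r (- \<xi>))" a \<xi> "\<lambda>r. (v2 r \<xi>, v2 r (- \<xi>))"])
       (use assms sol_pair in auto)
  then show ?thesis by simp
qed

lemma Mop_swap: "prod.swap (Mop a \<eta> s X) = Mop a \<eta> s (prod.swap X)"
  by (simp add: Mop_def)

lemma sol_exists: "\<exists>v. solves_fourier_eq a v \<and> (\<forall>\<eta>. v 1 \<eta> = g \<eta>)"
proof -
  define Y where "Y \<eta> = (SOME X. X 1 = (g \<eta>, g (- \<eta>)) \<and>
      (\<forall>s\<ge>1. (X has_vector_derivative Mop a \<eta> s (X s)) (at s within {1..})))" for \<eta>
  have Y: "Y \<eta> 1 = (g \<eta>, g (- \<eta>))"
      "\<And>s. s \<ge> 1 \<Longrightarrow> (Y \<eta> has_vector_derivative Mop a \<eta> s (Y \<eta> s)) (at s within {1..})" for \<eta>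
    using someI_ex[OF ode_exists[of "(g \<eta>, g (- \<eta>))" a \<eta>]] unfolding Y_def by auto
  have Y0: "fst (Y 0 s) = snd (Y 0 s)" if "s \<ge> 1" for s
  proof -
    have "prod.swap (Y 0 s) = Y 0 s"
    proof (rule ode_unique[of "\<lambda>r. prod.swap (Y 0 r)" a 0, OF _ Y(2) _ that])
      show "((\<lambda>r. prod.swap (Y 0 r)) has_vector_derivative Mop a 0 u (prod.swap (Y 0 u))) (at u within {1..})"
        if "u \<ge> 1" for u
        using has_vector_derivative_Pair[OF vd_snd[OF Y(2)[of u 0, OF that]] vd_fst[OF Y(2)[of u 0, OF that]]]
        by (simp add: Mop_def prod.swap_def)
    next
      have "Y 0 1 = (g 0, g 0)" using Y(1)[of 0] by simp
      then show "prod.swap (Y 0 1) = Y 0 1" by simp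
    qed
    then show ?thesis by (metis fst_swap)
  qed
  define v where "v r \<eta> = (if \<eta> \<ge> 0 then fst (Y \<eta> r) else snd (Y (- \<eta>) r))" for r \<eta>
  have init: "v 1 \<eta> = g \<eta>" for \<eta>
    by (simp add: v_def Y(1))
  have "solves_fourier_eq a v"
    unfolding solves_fourier_eq_def
  proof (intro allI impI)
    fix \<eta> s :: real assume s: "s \<ge> 1"
    have c: "cc a s = a\<^sup>2 / (2 * s)" using s by (rule cc_ge1)
    consider "\<eta> > 0" | "\<eta> < 0" | "\<eta> = 0" by linarith
    then show "\<exists>d. ((\<lambda>r. v r \<eta>) has_vector_derivative d) (at s within {1..}) \<and>
        \<i> * d - complex_of_real (\<eta>\<^sup>2) * v s \<eta> +
        complex_of_real (a\<^sup>2 / (2 * s)) * (v s \<eta> + cnj (v s (- \<eta>))) = 0"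
    proof cases
      case 1
      have vv: "(\<lambda>r. v r \<eta>) = (\<lambda>r. fst (Y \<eta> r))" "v s (- \<eta>) = snd (Y \<eta> s)"
        using 1 by (auto simp: v_def)
      have dd: "fst (Mop a \<eta> s (Y \<eta> s)) = - \<i> * complex_of_real (\<eta>\<^sup>2) * v s \<eta>
          + \<i> * complex_of_real (a\<^sup>2 / (2 * s)) * (v s \<eta> + cnj (v s (- \<eta>)))"
        using vv 1 by (simp add: Mop_def c v_def)
      show ?thesis
      proof (rule exI, rule conjI)
        show "((\<lambda>r. v r \<eta>) has_vector_derivative (- \<i> * complex_of_real (\<eta>\<^sup>2) * v s \<eta>
          + \<i> * complex_of_real (a\<^sup>2 / (2 * s)) * (v s \<eta> + cnj (v s (- \<eta>))))) (at s within {1..})"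
          using vd_fst[OF Y(2)[OF s, of \<eta>]] unfolding vv(1) dd .
      qed (rule alg1)
    next
      case 2
      have vv: "(\<lambda>r. v r \<eta>) = (\<lambda>r. snd (Y (- \<eta>) r))" "v s (- \<eta>) = fst (Y (- \<eta>) s)"
        using 2 by (auto simp: v_def)
      have dd: "snd (Mop a (- \<eta>) s (Y (- \<eta>) s)) = - \<i> * complex_of_real (\<eta>\<^sup>2) * v s \<eta>
          + \<i> * complex_of_real (a\<^sup>2 / (2 * s)) * (v s \<eta> + cnj (v s (- \<eta>)))"
        using vv 2 by (simp add: Mop_def c v_def)
      show ?thesis
      proof (rule exI, rule conjI)
        show "((\<lambda>r. v r \<eta>) has_vector_derivative (- \<i> * complex_of_real (\<eta>\<^sup>2) * v s \<eta>
          + \<i> * complex_of_real (a\<^sup>2 / (2 * s)) * (v s \<eta> + cnj (v s (- \<eta>))))) (at s within {1..})"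
          using vd_snd[OF Y(2)[OF s, of "- \<eta>"]] unfolding vv(1) dd .
      qed (rule alg1)
    next
      case 3
      have vv: "(\<lambda>r. v r \<eta>) = (\<lambda>r. fst (Y 0 r))" "v s (- \<eta>) = snd (Y 0 s)"
        using 3 Y0[OF s] by (auto simp: v_def)
      have dd: "fst (Mop a 0 s (Y 0 s)) = - \<i> * complex_of_real (\<eta>\<^sup>2) * v s \<eta>
          + \<i> * complex_of_real (a\<^sup>2 / (2 * s)) * (v s \<eta> + cnj (v s (- \<eta>)))"
        using vv 3 Y0[OF s] by (simp add: Mop_def c v_def)
      show ?thesis
      proof (rule exI, rule conjI)
        show "((\<lambda>r. v r \<eta>) has_vector_derivative (- \<i> * complex_of_real (\<eta>\<^sup>2) * v s \<eta>
          + \<i> * complex_of_real (a\<^sup>2 / (2 * s)) * (v s \<eta> + cnj (v s (- \<eta>))))) (at s within {1..})"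
          using vd_fst[OF Y(2)[OF s, of 0]] unfolding vv(1) dd .
      qed (rule alg1)
    qed
  qed
  with init show ?thesis by blast
qed

lemma sol_op_eq:
  assumes "solves_fourier_eq a v" "\<And>\<eta>. v 1 \<eta> = g \<eta>" "t \<ge> 1"
  shows "sol_op_F a t g \<xi> = v t \<xi>"
  unfolding sol_op_F_def
proof (rule the_equality)
  show "\<exists>v'. solves_fourier_eq a v' \<and> (\<forall>\<eta>. v' 1 \<eta> = g \<eta>) \<and> v' t \<xi> = v t \<xi>"
    using assms by blast
  fix z assume "\<exists>v'. solves_fourier_eq a v' \<and> (\<forall>\<eta>. v' 1 \<eta> = g \<eta>) \<and> v' t \<xi> = z"
  then obtain v' where "solves_fourier_eq a v'" "\<forall>\<eta>. v' 1 \<eta> = g \<eta>" "v' t \<xi> = z" by blast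
  then show "z = v t \<xi>" using sol_unique[of a v' v t \<xi>] assms by auto
qed

lemma sol_diff:
  assumes v1: "solves_fourier_eq a v1" and v2: "solves_fourier_eq a v2"
  shows "solves_fourier_eq a (\<lambda>r \<eta>. v1 r \<eta> - v2 r \<eta>)"
  unfolding solves_fourier_eq_def
proof (intro allI impI)
  fix \<eta> s :: real assume s: "s \<ge> 1"
  obtain d1 where d1: "((\<lambda>r. v1 r \<eta>) has_vector_derivative d1) (at s within {1..})"
    "\<i> * d1 - complex_of_real (\<eta>\<^sup>2) * v1 s \<eta>
          + complex_of_real (a\<^sup>2 / (2 * s)) * (v1 s \<eta> + cnj (v1 s (- \<eta>))) = 0"
    using v1 s unfolding solves_fourier_eq_def by blast
  obtain d2 where d2: "((\<lambda>r. v2 r \<eta>) has_vector_derivative d2) (at s within {1..})"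
    "\<i> * d2 - complex_of_real (\<eta>\<^sup>2) * v2 s \<eta>
          + complex_of_real (a\<^sup>2 / (2 * s)) * (v2 s \<eta> + cnj (v2 s (- \<eta>))) = 0"
    using v2 s unfolding solves_fourier_eq_def by blast
  show "\<exists>d. ((\<lambda>r. v1 r \<eta> - v2 r \<eta>) has_vector_derivative d) (at s within {1..}) \<and>
        \<i> * d - complex_of_real (\<eta>\<^sup>2) * (v1 s \<eta> - v2 s \<eta>) +
        complex_of_real (a\<^sup>2 / (2 * s)) * (v1 s \<eta> - v2 s \<eta> + cnj (v1 s (- \<eta>) - v2 s (- \<eta>))) = 0"
  proof (intro exI conjI)
    show "((\<lambda>r. v1 r \<eta> - v2 r \<eta>) has_vector_derivative d1 - d2) (at s within {1..})"
      by (intro derivative_intros d1(1) d2(1))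
    have "(\<i> * d1 - complex_of_real (\<eta>\<^sup>2) * v1 s \<eta>
          + complex_of_real (a\<^sup>2 / (2 * s)) * (v1 s \<eta> + cnj (v1 s (- \<eta>))))
        - (\<i> * d2 - complex_of_real (\<eta>\<^sup>2) * v2 s \<eta>
          + complex_of_real (a\<^sup>2 / (2 * s)) * (v2 s \<eta> + cnj (v2 s (- \<eta>)))) = 0"
      using d1(2) d2(2) by simp
    then show "\<i> * (d1 - d2) - complex_of_real (\<eta>\<^sup>2) * (v1 s \<eta> - v2 s \<eta>) +
        complex_of_real (a\<^sup>2 / (2 * s)) * (v1 s \<eta> - v2 s \<eta> + cnj (v1 s (- \<eta>) - v2 s (- \<eta>))) = 0"
      by (simp add: algebra_simps)
  qed
qed


lemma alg_main:
  fixes P Q Aa Ab c e ka kb vta vtb Ata d Wa Wb :: complex and \<eta> s a :: real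
  assumes s: "s > 0"
    and c: "c = complex_of_real (a\<^sup>2 / (2 * s))"
    and e: "e = complex_of_real \<eta>"
    and ka: "ka = complex_of_real (2 * a\<^sup>2 / \<eta>)"
    and kb: "kb = complex_of_real (2 * a\<^sup>2 / (- \<eta>))"
    and vta: "vta = \<i> * (\<i> * e) * (\<i> * e) * P + \<i> * c * (P + cnj Q)"
    and vtb: "vtb = \<i> * (\<i> * (- e)) * (\<i> * (- e)) * Q + \<i> * c * (Q + cnj P)"
    and Ata: "Ata = \<i> * (\<i> * e * (\<i> * e * Aa - P) - \<i> * e * P) + \<i> * c * (Aa + cnj Ab)"
    and d: "d = Ata - (2 * (complex_of_real s * vta + 1 * P) * e) + ka / 2 * (vta + cnj vtb)"
    and Wa: "Wa = Aa - 2 * complex_of_real s * e * P + ka / 2 * (P + cnj Q)"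
    and Wb: "Wb = Ab - 2 * complex_of_real s * (- e) * Q + kb / 2 * (Q + cnj P)"
  shows "\<i> * d - complex_of_real (\<eta>\<^sup>2) * Wa + c * (Wa + cnj Wb) = 0"
proof (cases "\<eta> = 0")
  case True
  then show ?thesis using s unfolding c e ka kb vta vtb Ata d Wa Wb
    by (simp add: complex_eq_iff field_simps power2_eq_square)
next
  case False
  then show ?thesis using s unfolding c e ka kb vta vtb Ata d Wa Wb
    by (simp add: complex_eq_iff field_simps power2_eq_square)
qed

lemma ee_cnj: "(\<integral>x. ee \<eta> x * cnj (f x) \<partial>lborel) = cnj (\<integral>x. ee (- \<eta>) x * f x \<partial>lborel)"
proof -
  have c: "cnj (ee (- \<eta>) x) = ee \<eta> x" for x
    by (simp add: exp_cnj)
  have "(\<lambda>x. ee \<eta> x * cnj (f x)) = (\<lambda>x. cnj (ee (- \<eta>) x * f x))"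
    by (rule ext) (simp only: complex_cnj_mult c)
  then show ?thesis by (simp only: Bochner_Integration.integral_cnj)
qed



lemma vd_of_real_id: "((\<lambda>x. complex_of_real x) has_vector_derivative 1) (at x)"
  by (auto intro!: derivative_eq_intros simp: has_real_derivative_iff_has_vector_derivative[symmetric])


lemma W_solves:
  fixes a :: real and \<omega> \<omega>t \<omega>x \<omega>xx :: "real \<Rightarrow> real \<Rightarrow> complex"
  assumes deriv_t: "\<forall>s\<ge>1. \<forall>x. ((\<lambda>r. \<omega> r x) has_vector_derivative \<omega>t s x) (at s within {1..})"
    and deriv_x: "\<forall>s\<ge>1. \<forall>x. (\<omega> s has_vector_derivative \<omega>x s x) (at x)"
    and deriv_xx: "\<forall>s\<ge>1. \<forall>x. (\<omega>x s has_vector_derivative \<omega>xx s x) (at x)"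
    and eqn: "\<forall>s\<ge>1. \<forall>x. \<i> * \<omega>t s x + \<omega>xx s x
                + complex_of_real (a\<^sup>2 / (2 * s)) * (\<omega> s x + cnj (\<omega> s x)) = 0"
    and cont_t: "continuous_on ({1..} \<times> UNIV) (\<lambda>(s, x). \<omega>t s x)"
    and decay: "\<forall>T\<ge>1. \<exists>C. \<forall>s\<in>{1..T}. \<forall>x.
                  norm (\<omega> s x) + norm (\<omega>x s x) + norm (\<omega>xx s x) + norm (\<omega>t s x)
                    \<le> C / (1 + \<bar>x\<bar>) ^ 3"
  shows "solves_fourier_eq a (\<lambda>r \<eta>. fourier (Jop r (\<omega> r)) \<eta>
            + complex_of_real (2 * a\<^sup>2 / \<eta>) * fourier (\<lambda>x. complex_of_real (Re (\<omega> r x))) \<eta>)"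
proof -
  have cw: "continuous_on UNIV (\<omega> r)" if "r \<ge> 1" for r
    using deriv_x that by (intro continuous_at_imp_continuous_on) (meson has_vector_derivative_continuous)
  have cwx: "continuous_on UNIV (\<omega>x r)" if "r \<ge> 1" for r
    using deriv_xx that by (intro continuous_at_imp_continuous_on) (meson has_vector_derivative_continuous)
  have cwt: "continuous_on UNIV (\<omega>t r)" if "r \<ge> 1" for r
  proof -
    have "continuous_on UNIV ((\<lambda>(s, x). \<omega>t s x) \<circ> (\<lambda>x. (r, x)))"
      by (rule continuous_on_compose[OF _ continuous_on_subset[OF cont_t]])
         (use that in \<open>auto intro!: continuous_intros\<close>)
    then show ?thesis by (simp add: comp_def)
  qed
  have wxx_eq: "\<omega>xx r x = - \<i> * \<omega>t r x - complex_of_real (a\<^sup>2 / (2 * r)) * (\<omega> r x + cnj (\<omega> r x))"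
    if "r \<ge> 1" for r x
    using eqn that by (auto simp: algebra_simps eq_neg_iff_add_eq_0)
  have wt_eq: "\<omega>t r x = \<i> * \<omega>xx r x + \<i> * complex_of_real (a\<^sup>2 / (2 * r)) * (\<omega> r x + cnj (\<omega> r x))"
    if "r \<ge> 1" for r x
    using solve_i[of "\<omega>t r x" "\<omega>xx r x + complex_of_real (a\<^sup>2 / (2 * r)) * (\<omega> r x + cnj (\<omega> r x))"]
      eqn that by (auto simp: algebra_simps)
  have cwxx: "continuous_on UNIV (\<omega>xx r)" if "r \<ge> 1" for r
  proof -
    have "continuous_on UNIV (\<lambda>x. - \<i> * \<omega>t r x - complex_of_real (a\<^sup>2 / (2 * r)) * (\<omega> r x + cnj (\<omega> r x)))"
      using cwt[OF that] cw[OF that] by (intro continuous_intros)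
    then show ?thesis using wxx_eq[OF that] by simp
  qed
  have bnd: "\<exists>C. \<forall>r\<in>{1..T}. \<forall>x. norm (\<omega> r x) \<le> C / (1 + \<bar>x\<bar>) ^ 3 \<and> norm (\<omega>x r x) \<le> C / (1 + \<bar>x\<bar>) ^ 3
      \<and> norm (\<omega>xx r x) \<le> C / (1 + \<bar>x\<bar>) ^ 3 \<and> norm (\<omega>t r x) \<le> C / (1 + \<bar>x\<bar>) ^ 3" if T1: "T \<ge> 1" for T
  proof -
    obtain C where C: "\<forall>s\<in>{1..T}. \<forall>x. norm (\<omega> s x) + norm (\<omega>x s x) + norm (\<omega>xx s x) + norm (\<omega>t s x)
                    \<le> C / (1 + \<bar>x\<bar>) ^ 3" using decay T1 by blast
    show ?thesis
    proof (intro exI ballI allI)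
      fix r x assume "r \<in> {1..T}"
      then have "norm (\<omega> r x) + norm (\<omega>x r x) + norm (\<omega>xx r x) + norm (\<omega>t r x) \<le> C / (1 + \<bar>x\<bar>) ^ 3"
        using C by blast
      then show "norm (\<omega> r x) \<le> C / (1 + \<bar>x\<bar>) ^ 3 \<and> norm (\<omega>x r x) \<le> C / (1 + \<bar>x\<bar>) ^ 3
      \<and> norm (\<omega>xx r x) \<le> C / (1 + \<bar>x\<bar>) ^ 3 \<and> norm (\<omega>t r x) \<le> C / (1 + \<bar>x\<bar>) ^ 3"
        by (smt (verit) norm_ge_zero)
    qed
  qed
  have bnd1: "\<exists>C. \<forall>x. norm (\<omega> r x) \<le> C / (1 + \<bar>x\<bar>) ^ 3 \<and> norm (\<omega>x r x) \<le> C / (1 + \<bar>x\<bar>) ^ 3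
      \<and> norm (\<omega>xx r x) \<le> C / (1 + \<bar>x\<bar>) ^ 3 \<and> norm (\<omega>t r x) \<le> C / (1 + \<bar>x\<bar>) ^ 3" if r: "r \<ge> 1" for r
  proof -
    obtain C where "\<forall>r'\<in>{1..r}. \<forall>x. norm (\<omega> r' x) \<le> C / (1 + \<bar>x\<bar>) ^ 3 \<and> norm (\<omega>x r' x) \<le> C / (1 + \<bar>x\<bar>) ^ 3
      \<and> norm (\<omega>xx r' x) \<le> C / (1 + \<bar>x\<bar>) ^ 3 \<and> norm (\<omega>t r' x) \<le> C / (1 + \<bar>x\<bar>) ^ 3"
      using bnd[OF r] by blast
    moreover have "r \<in> {1..r}" using r by simp
    ultimately show ?thesis by blast
  qed
  have integ: "integrable lborel (\<omega> r) \<and> integrable lborel (\<lambda>x. complex_of_real x * \<omega> r x)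
      \<and> integrable lborel (\<omega>x r) \<and> integrable lborel (\<lambda>x. complex_of_real x * \<omega>x r x)
      \<and> integrable lborel (\<omega>xx r) \<and> integrable lborel (\<lambda>x. complex_of_real x * \<omega>xx r x)
      \<and> integrable lborel (\<omega>t r) \<and> integrable lborel (\<lambda>x. complex_of_real x * \<omega>t r x)" if r: "r \<ge> 1" for r
  proof -
    obtain C where C: "\<And>x. norm (\<omega> r x) \<le> C / (1 + \<bar>x\<bar>) ^ 3" "\<And>x. norm (\<omega>x r x) \<le> C / (1 + \<bar>x\<bar>) ^ 3"
      "\<And>x. norm (\<omega>xx r x) \<le> C / (1 + \<bar>x\<bar>) ^ 3" "\<And>x. norm (\<omega>t r x) \<le> C / (1 + \<bar>x\<bar>) ^ 3"
      using bnd1[OF r] by blast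
    show ?thesis
      using int_decay[OF meas_cont[OF cw[OF r]] C(1)] int_decay[OF meas_cont[OF cwx[OF r]] C(2)]
        int_decay[OF meas_cont[OF cwxx[OF r]] C(3)] int_decay[OF meas_cont[OF cwt[OF r]] C(4)]
      by blast
  qed
  have lims: "(\<omega> r \<longlongrightarrow> 0) at_top \<and> (\<omega> r \<longlongrightarrow> 0) at_bot
      \<and> ((\<lambda>x. complex_of_real x * \<omega> r x) \<longlongrightarrow> 0) at_top \<and> ((\<lambda>x. complex_of_real x * \<omega> r x) \<longlongrightarrow> 0) at_bot
      \<and> (\<omega>x r \<longlongrightarrow> 0) at_top \<and> (\<omega>x r \<longlongrightarrow> 0) at_bot
      \<and> ((\<lambda>x. complex_of_real x * \<omega>x r x) \<longlongrightarrow> 0) at_top \<and> ((\<lambda>x. complex_of_real x * \<omega>x r x) \<longlongrightarrow> 0) at_bot"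
    if r: "r \<ge> 1" for r
  proof -
    obtain C where C: "\<And>x. norm (\<omega> r x) \<le> C / (1 + \<bar>x\<bar>) ^ 3" "\<And>x. norm (\<omega>x r x) \<le> C / (1 + \<bar>x\<bar>) ^ 3"
      using bnd1[OF r] by blast
    show ?thesis using lim_decay3[OF C(1)] lim_decay3[OF C(2)] by blast
  qed
  have isc: "isCont (\<omega> r) x" "isCont (\<omega>x r) x" "isCont (\<omega>xx r) x" if r: "r \<ge> 1" for r x
    using cw[OF r] cwx[OF r] cwxx[OF r] by (simp_all add: continuous_on_eq_continuous_at)
  have I1: "(\<integral>x. ee \<eta> x * \<omega>x r x \<partial>lborel) = \<i> * complex_of_real \<eta> * (\<integral>x. ee \<eta> x * \<omega> r x \<partial>lborel)"
    if r: "r \<ge> 1" for r \<eta>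
    by (rule ibp) (use deriv_x r isc[OF r] integ[OF r] lims[OF r] in auto)
  have I2: "(\<integral>x. ee \<eta> x * \<omega>xx r x \<partial>lborel) = \<i> * complex_of_real \<eta> * (\<integral>x. ee \<eta> x * \<omega>x r x \<partial>lborel)"
    if r: "r \<ge> 1" for r \<eta>
    by (rule ibp) (use deriv_xx r isc[OF r] integ[OF r] lims[OF r] in auto)
  have I3: "(\<integral>x. ee \<eta> x * (\<omega> r x + complex_of_real x * \<omega>x r x) \<partial>lborel)
      = \<i> * complex_of_real \<eta> * (\<integral>x. ee \<eta> x * (complex_of_real x * \<omega> r x) \<partial>lborel)"
    if r: "r \<ge> 1" for r \<eta>
  proof (rule ibp)
    show "((\<lambda>x. complex_of_real x * \<omega> r x) has_vector_derivative \<omega> r x + complex_of_real x * \<omega>x r x) (at x)" for x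
      using has_vector_derivative_mult[OF vd_of_real_id deriv_x[rule_format, OF r, of x]] by (simp add: add.commute)
    show "isCont (\<lambda>x. \<omega> r x + complex_of_real x * \<omega>x r x) x" for x
      using isc[OF r] by (intro continuous_intros) auto
  qed (use integ[OF r] lims[OF r] in auto)
  have I4: "(\<integral>x. ee \<eta> x * (\<omega>x r x + complex_of_real x * \<omega>xx r x) \<partial>lborel)
      = \<i> * complex_of_real \<eta> * (\<integral>x. ee \<eta> x * (complex_of_real x * \<omega>x r x) \<partial>lborel)"
    if r: "r \<ge> 1" for r \<eta>
  proof (rule ibp)
    show "((\<lambda>x. complex_of_real x * \<omega>x r x) has_vector_derivative \<omega>x r x + complex_of_real x * \<omega>xx r x) (at x)" for x
      using has_vector_derivative_mult[OF vd_of_real_id deriv_xx[rule_format, OF r, of x]] by (simp add: add.commute)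
    show "isCont (\<lambda>x. \<omega>x r x + complex_of_real x * \<omega>xx r x) x" for x
      using isc[OF r] by (intro continuous_intros) auto
  qed (use integ[OF r] lims[OF r] in auto)
  define V where "V r \<eta> = (\<integral>x. ee \<eta> x * \<omega> r x \<partial>lborel)" for r \<eta>
  define A where "A r \<eta> = (\<integral>x. ee \<eta> x * (complex_of_real x * \<omega> r x) \<partial>lborel)" for r \<eta>
  have ie: "integrable lborel (\<lambda>x. ee \<eta> x * \<omega> r x)" "integrable lborel (\<lambda>x. ee \<eta> x * (complex_of_real x * \<omega> r x))"
    "integrable lborel (\<lambda>x. ee \<eta> x * \<omega>x r x)" "integrable lborel (\<lambda>x. ee \<eta> x * (complex_of_real x * \<omega>x r x))"
    "integrable lborel (\<lambda>x. ee \<eta> x * \<omega>xx r x)" "integrable lborel (\<lambda>x. ee \<eta> x * (complex_of_real x * \<omega>xx r x))"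
    "integrable lborel (\<lambda>x. ee \<eta> x * \<omega>t r x)" "integrable lborel (\<lambda>x. ee \<eta> x * (complex_of_real x * \<omega>t r x))"
    "integrable lborel (\<lambda>x. ee \<eta> x * cnj (\<omega> r x))" "integrable lborel (\<lambda>x. ee \<eta> x * cnj (complex_of_real x * \<omega> r x))"
    if r: "r \<ge> 1" for r \<eta>
    by (intro integrable_ee_mult integrable_cnj; use integ[OF r] in blast)+
  have FJ: "fourier (Jop r (\<omega> r)) \<eta> = A r \<eta> - 2 * complex_of_real r * complex_of_real \<eta> * V r \<eta>"
    if r: "r \<ge> 1" for r \<eta>
  proof -
    have "(\<lambda>x. ee \<eta> x * Jop r (\<omega> r) x)
        = (\<lambda>x. ee \<eta> x * (complex_of_real x * \<omega> r x) + (2 * \<i> * complex_of_real r) * (ee \<eta> x * \<omega>x r x))"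
    proof
      fix x
      have "vector_derivative (\<omega> r) (at x) = \<omega>x r x"
        using deriv_x r by (auto intro: vector_derivative_at)
      then show "ee \<eta> x * Jop r (\<omega> r) x
        = ee \<eta> x * (complex_of_real x * \<omega> r x) + (2 * \<i> * complex_of_real r) * (ee \<eta> x * \<omega>x r x)"
        by (simp add: Jop_def algebra_simps)
    qed
    then have "fourier (Jop r (\<omega> r)) \<eta> = A r \<eta> + (2 * \<i> * complex_of_real r) * (\<integral>x. ee \<eta> x * \<omega>x r x \<partial>lborel)"
      using ie[OF r] by (simp add: fourier_def A_def)
    also have "\<dots> = A r \<eta> - 2 * complex_of_real r * complex_of_real \<eta> * V r \<eta>"
      unfolding I1[OF r] V_def by (simp add: algebra_simps)
    finally show ?thesis .
  qed
  have FR: "fourier (\<lambda>x. complex_of_real (Re (\<omega> r x))) \<eta> = (V r \<eta> + cnj (V r (- \<eta>))) / 2"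
    if r: "r \<ge> 1" for r \<eta>
  proof -
    have "(\<lambda>x. ee \<eta> x * complex_of_real (Re (\<omega> r x))) = (\<lambda>x. (ee \<eta> x * \<omega> r x + ee \<eta> x * cnj (\<omega> r x)) / 2)"
    proof
      fix x
      have eq: "complex_of_real (Re (\<omega> r x)) = (\<omega> r x + cnj (\<omega> r x)) / 2"
        by (simp add: complex_add_cnj)
      show "ee \<eta> x * complex_of_real (Re (\<omega> r x)) = (ee \<eta> x * \<omega> r x + ee \<eta> x * cnj (\<omega> r x)) / 2"
        by (simp only: eq) (simp add: distrib_left)
    qed
    then have "fourier (\<lambda>x. complex_of_real (Re (\<omega> r x))) \<eta>
        = ((\<integral>x. ee \<eta> x * \<omega> r x \<partial>lborel) + (\<integral>x. ee \<eta> x * cnj (\<omega> r x) \<partial>lborel)) / 2"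
      using ie[OF r] by (simp add: fourier_def)
    then show ?thesis unfolding ee_cnj V_def .
  qed
  have I3': "(\<integral>x. ee \<eta> x * (complex_of_real x * \<omega>x r x) \<partial>lborel) = \<i> * complex_of_real \<eta> * A r \<eta> - V r \<eta>"
    if r: "r \<ge> 1" for r \<eta>
  proof -
    have "(\<lambda>x. ee \<eta> x * (\<omega> r x + complex_of_real x * \<omega>x r x)) = (\<lambda>x. ee \<eta> x * \<omega> r x + ee \<eta> x * (complex_of_real x * \<omega>x r x))"
      by (simp only: distrib_left)
    then have "(\<integral>x. ee \<eta> x * (\<omega> r x + complex_of_real x * \<omega>x r x) \<partial>lborel)
        = V r \<eta> + (\<integral>x. ee \<eta> x * (complex_of_real x * \<omega>x r x) \<partial>lborel)"
      unfolding V_def by (simp only: Bochner_Integration.integral_add[OF ie(1)[OF r] ie(4)[OF r]])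
    with I3[OF r, of \<eta>] show ?thesis unfolding A_def[symmetric] by (simp add: algebra_simps)
  qed
  have I4': "(\<integral>x. ee \<eta> x * (complex_of_real x * \<omega>xx r x) \<partial>lborel)
      = \<i> * complex_of_real \<eta> * (\<integral>x. ee \<eta> x * (complex_of_real x * \<omega>x r x) \<partial>lborel) - (\<integral>x. ee \<eta> x * \<omega>x r x \<partial>lborel)"
    if r: "r \<ge> 1" for r \<eta>
  proof -
    have "(\<lambda>x. ee \<eta> x * (\<omega>x r x + complex_of_real x * \<omega>xx r x)) = (\<lambda>x. ee \<eta> x * \<omega>x r x + ee \<eta> x * (complex_of_real x * \<omega>xx r x))"
      by (simp only: distrib_left)
    then have "(\<integral>x. ee \<eta> x * (\<omega>x r x + complex_of_real x * \<omega>xx r x) \<partial>lborel)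
        = (\<integral>x. ee \<eta> x * \<omega>x r x \<partial>lborel) + (\<integral>x. ee \<eta> x * (complex_of_real x * \<omega>xx r x) \<partial>lborel)"
      by (simp only: Bochner_Integration.integral_add[OF ie(3)[OF r] ie(6)[OF r]])
    with I4[OF r, of \<eta>] show ?thesis by (simp add: algebra_simps)
  qed
  have VT: "(\<integral>x. ee \<eta> x * \<omega>t s x \<partial>lborel) = \<i> * (\<i> * complex_of_real \<eta>) * (\<i> * complex_of_real \<eta>) * V s \<eta>
      + \<i> * complex_of_real (a\<^sup>2 / (2 * s)) * (V s \<eta> + cnj (V s (- \<eta>)))"
    if s: "s \<ge> 1" for s \<eta>
  proof -
    let ?c = "complex_of_real (a\<^sup>2 / (2 * s))"
    have "(\<lambda>x. ee \<eta> x * \<omega>t s x) = (\<lambda>x. \<i> * (ee \<eta> x * \<omega>xx s x) + (\<i> * ?c) * (ee \<eta> x * \<omega> s x + ee \<eta> x * cnj (\<omega> s x)))"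
      by (rule ext) (simp only: wt_eq[OF s] ring_distribs mult_ac add_ac)
    then have "(\<integral>x. ee \<eta> x * \<omega>t s x \<partial>lborel) = \<i> * (\<integral>x. ee \<eta> x * \<omega>xx s x \<partial>lborel)
        + (\<i> * ?c) * ((\<integral>x. ee \<eta> x * \<omega> s x \<partial>lborel) + (\<integral>x. ee \<eta> x * cnj (\<omega> s x) \<partial>lborel))"
      by (simp only: Bochner_Integration.integral_add[OF integrable_mult_right[OF ie(5)[OF s]]
            integrable_mult_right[OF Bochner_Integration.integrable_add[OF ie(1)[OF s] ie(9)[OF s]]]]
          integral_mult_right_zero Bochner_Integration.integral_add[OF ie(1)[OF s] ie(9)[OF s]])
    then show ?thesis unfolding I2[OF s] I1[OF s] ee_cnj V_def[symmetric] by (simp add: algebra_simps)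
  qed
  have AT: "(\<integral>x. ee \<eta> x * (complex_of_real x * \<omega>t s x) \<partial>lborel)
      = \<i> * (\<i> * complex_of_real \<eta> * (\<i> * complex_of_real \<eta> * A s \<eta> - V s \<eta>) - \<i> * complex_of_real \<eta> * V s \<eta>)
      + \<i> * complex_of_real (a\<^sup>2 / (2 * s)) * (A s \<eta> + cnj (A s (- \<eta>)))"
    if s: "s \<ge> 1" for s \<eta>
  proof -
    let ?c = "complex_of_real (a\<^sup>2 / (2 * s))"
    have "(\<lambda>x. ee \<eta> x * (complex_of_real x * \<omega>t s x)) = (\<lambda>x. \<i> * (ee \<eta> x * (complex_of_real x * \<omega>xx s x))
        + (\<i> * ?c) * (ee \<eta> x * (complex_of_real x * \<omega> s x) + ee \<eta> x * cnj (complex_of_real x * \<omega> s x)))"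
      by (rule ext) (simp only: wt_eq[OF s] ring_distribs mult_ac add_ac complex_cnj_mult complex_cnj_complex_of_real)
    then have "(\<integral>x. ee \<eta> x * (complex_of_real x * \<omega>t s x) \<partial>lborel) = \<i> * (\<integral>x. ee \<eta> x * (complex_of_real x * \<omega>xx s x) \<partial>lborel)
        + (\<i> * ?c) * ((\<integral>x. ee \<eta> x * (complex_of_real x * \<omega> s x) \<partial>lborel) + (\<integral>x. ee \<eta> x * cnj (complex_of_real x * \<omega> s x) \<partial>lborel))"
      by (simp only: Bochner_Integration.integral_add[OF integrable_mult_right[OF ie(6)[OF s]]
            integrable_mult_right[OF Bochner_Integration.integrable_add[OF ie(2)[OF s] ie(10)[OF s]]]]
          integral_mult_right_zero Bochner_Integration.integral_add[OF ie(2)[OF s] ie(10)[OF s]])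
    then show ?thesis unfolding I4'[OF s] I3'[OF s] I1[OF s] ee_cnj A_def[symmetric] V_def[symmetric] by (simp add: algebra_simps)
  qed
  have derivs: "((\<lambda>r. V r \<eta>) has_vector_derivative (\<integral>x. ee \<eta> x * \<omega>t s x \<partial>lborel)) (at s within {1..})
      \<and> ((\<lambda>r. A r \<eta>) has_vector_derivative (\<integral>x. ee \<eta> x * (complex_of_real x * \<omega>t s x) \<partial>lborel)) (at s within {1..})"
    if s: "s \<ge> 1" for s \<eta>
  proof -
    obtain C where C: "\<forall>r\<in>{1..s+1}. \<forall>x. norm (\<omega> r x) \<le> C / (1 + \<bar>x\<bar>) ^ 3 \<and> norm (\<omega>x r x) \<le> C / (1 + \<bar>x\<bar>) ^ 3
      \<and> norm (\<omega>xx r x) \<le> C / (1 + \<bar>x\<bar>) ^ 3 \<and> norm (\<omega>t r x) \<le> C / (1 + \<bar>x\<bar>) ^ 3"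
      using bnd[of "s+1"] s by auto
    have Ct: "norm (\<omega>t r x) \<le> C / (1 + \<bar>x\<bar>) ^ 3" if "1 \<le> r" "r \<le> s + 1" for r x
      using C that by auto
    have C0: "C \<ge> 0" using Ct[of s 0] s norm_ge_zero[of "\<omega>t s 0"] by (simp del: norm_ge_zero)
    have dV: "((\<lambda>r. V r \<eta>) has_vector_derivative (\<integral>x. ee \<eta> x * \<omega>t s x \<partial>lborel)) (at s within {1..})"
      unfolding V_def
    proof (rule param_deriv[where B="\<lambda>x. C / (1 + \<bar>x\<bar>) ^ 2"])
      show "((\<lambda>r. ee \<eta> x * \<omega> r x) has_vector_derivative ee \<eta> x * \<omega>t r x) (at r within {1..})" if "r \<ge> 1" for r x
        by (rule has_vector_derivative_mult_right) (use deriv_t that in auto)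
      show "(\<lambda>x. ee \<eta> x * \<omega> r x) \<in> borel_measurable lborel" if "r \<ge> 1" for r
        using borel_measurable_integrable[OF ie(1)[OF that]] .
      show "(\<lambda>x. ee \<eta> x * \<omega>t s x) \<in> borel_measurable lborel"
        using borel_measurable_integrable[OF ie(7)[OF s]] .
      show "norm (ee \<eta> x * \<omega>t r x) \<le> C / (1 + \<bar>x\<bar>) ^ 2" if "1 \<le> r" "r \<le> s + 1" for r x
        using Ct[OF that, of x] decay32[OF C0, of x] by (simp add: norm_mult)
      show "integrable lborel (\<lambda>x. C / (1 + \<bar>x\<bar>) ^ 2)" by (rule integrable_decay2)
      show "integrable lborel (\<lambda>x. ee \<eta> x * \<omega> r x)" if "r \<ge> 1" for r using ie(1)[OF that] .
    qed (rule s)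
    have dA: "((\<lambda>r. A r \<eta>) has_vector_derivative (\<integral>x. ee \<eta> x * (complex_of_real x * \<omega>t s x) \<partial>lborel)) (at s within {1..})"
      unfolding A_def
    proof (rule param_deriv[where B="\<lambda>x. C / (1 + \<bar>x\<bar>) ^ 2"])
      show "((\<lambda>r. ee \<eta> x * (complex_of_real x * \<omega> r x)) has_vector_derivative ee \<eta> x * (complex_of_real x * \<omega>t r x)) (at r within {1..})" if "r \<ge> 1" for r x
        by (rule has_vector_derivative_mult_right, rule has_vector_derivative_mult_right) (use deriv_t that in auto)
      show "(\<lambda>x. ee \<eta> x * (complex_of_real x * \<omega> r x)) \<in> borel_measurable lborel" if "r \<ge> 1" for r
        using borel_measurable_integrable[OF ie(2)[OF that]] .
      show "(\<lambda>x. ee \<eta> x * (complex_of_real x * \<omega>t s x)) \<in> borel_measurable lborel"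
        using borel_measurable_integrable[OF ie(8)[OF s]] .
      show "norm (ee \<eta> x * (complex_of_real x * \<omega>t r x)) \<le> C / (1 + \<bar>x\<bar>) ^ 2" if "1 \<le> r" "r \<le> s + 1" for r x
      proof -
        have "norm (ee \<eta> x * (complex_of_real x * \<omega>t r x)) = \<bar>x\<bar> * norm (\<omega>t r x)" by (simp add: norm_mult)
        also have "\<dots> \<le> \<bar>x\<bar> * (C / (1 + \<bar>x\<bar>) ^ 3)" by (rule mult_left_mono[OF Ct[OF that]]) auto
        also have "\<dots> \<le> C / (1 + \<bar>x\<bar>) ^ 2" by (rule decay_x[OF C0])
        finally show ?thesis .
      qed
      show "integrable lborel (\<lambda>x. C / (1 + \<bar>x\<bar>) ^ 2)" by (rule integrable_decay2)
      show "integrable lborel (\<lambda>x. ee \<eta> x * (complex_of_real x * \<omega> r x))" if "r \<ge> 1" for r using ie(2)[OF that] .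
    qed (rule s)
    show ?thesis using dV dA by blast
  qed
  show ?thesis
    unfolding solves_fourier_eq_def
  proof (intro allI impI)
    fix \<eta> s :: real assume s: "s \<ge> 1"
    let ?e = "complex_of_real \<eta>"
    let ?k1 = "complex_of_real (2 * a\<^sup>2 / \<eta>)"
    let ?k2 = "complex_of_real (2 * a\<^sup>2 / (- \<eta>))"
    let ?c = "complex_of_real (a\<^sup>2 / (2 * s))"
    let ?W = "\<lambda>r \<eta>. fourier (Jop r (\<omega> r)) \<eta>
            + complex_of_real (2 * a\<^sup>2 / \<eta>) * fourier (\<lambda>x. complex_of_real (Re (\<omega> r x))) \<eta>"
    let ?vt1 = "\<integral>x. ee \<eta> x * \<omega>t s x \<partial>lborel"
    let ?vt2 = "\<integral>x. ee (- \<eta>) x * \<omega>t s x \<partial>lborel"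
    let ?At1 = "\<integral>x. ee \<eta> x * (complex_of_real x * \<omega>t s x) \<partial>lborel"
    define G where "G r = A r \<eta> - 2 * (complex_of_real r * V r \<eta>) * ?e + ?k1 / 2 * (V r \<eta> + cnj (V r (- \<eta>)))" for r
    let ?d = "?At1 - (2 * (complex_of_real s * ?vt1 + 1 * V s \<eta>) * ?e) + ?k1 / 2 * (?vt1 + cnj ?vt2)"
    have GW: "G r = ?W r \<eta>" if "r \<in> {1..}" for r
    proof -
      have r1: "r \<ge> 1" using that by simp
      have k: "?k1 / 2 * (V r \<eta> + cnj (V r (- \<eta>))) = ?k1 * ((V r \<eta> + cnj (V r (- \<eta>))) / 2)"
        by simp
      show ?thesis by (simp only: G_def FJ[OF r1] FR[OF r1] k) (simp only: mult_ac)
    qed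
    have dprod: "((\<lambda>r. complex_of_real r * V r \<eta>) has_vector_derivative (complex_of_real s * ?vt1 + 1 * V s \<eta>)) (at s within {1..})"
      by (rule has_vector_derivative_mult[OF has_vector_derivative_at_within[OF vd_of_real_id]]) (use derivs[OF s] in blast)
    have dG: "(G has_vector_derivative ?d) (at s within {1..})"
      unfolding G_def
      by (intro has_vector_derivative_diff has_vector_derivative_add has_vector_derivative_mult_right
          has_vector_derivative_mult_left has_vector_derivative_cnj dprod)
         (use derivs[OF s, of \<eta>] derivs[OF s, of "- \<eta>"] in auto)
    have dW: "((\<lambda>r. ?W r \<eta>) has_vector_derivative ?d) (at s within {1..})"
      by (rule has_vector_derivative_transform_within[OF dG, of 1]) (use s GW in auto)
    have W1: "?W s \<eta> = A s \<eta> - 2 * complex_of_real s * ?e * V s \<eta> + ?k1 / 2 * (V s \<eta> + cnj (V s (- \<eta>)))"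
    proof -
      have k: "?k1 * ((V s \<eta> + cnj (V s (- \<eta>))) / 2) = ?k1 / 2 * (V s \<eta> + cnj (V s (- \<eta>)))" by simp
      show ?thesis by (simp only: FJ[OF s] FR[OF s] k)
    qed
    have W2: "?W s (- \<eta>) = A s (- \<eta>) - 2 * complex_of_real s * (- ?e) * V s (- \<eta>) + ?k2 / 2 * (V s (- \<eta>) + cnj (V s \<eta>))"
    proof -
      have k: "?k2 * ((V s (- \<eta>) + cnj (V s \<eta>)) / 2) = ?k2 / 2 * (V s (- \<eta>) + cnj (V s \<eta>))" by simp
      show ?thesis by (simp only: FJ[OF s] FR[OF s] minus_minus k of_real_minus)
    qed
    have eq: "\<i> * ?d - complex_of_real (\<eta>\<^sup>2) * ?W s \<eta> + ?c * (?W s \<eta> + cnj (?W s (- \<eta>))) = 0"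
    proof (rule alg_main[where P="V s \<eta>" and Q="V s (- \<eta>)" and Aa="A s \<eta>" and Ab="A s (- \<eta>)"
          and vta="?vt1" and vtb="?vt2" and Ata="?At1" and e="?e" and ka="?k1" and kb="?k2"])
      show "?vt1 = \<i> * (\<i> * ?e) * (\<i> * ?e) * V s \<eta> + \<i> * ?c * (V s \<eta> + cnj (V s (- \<eta>)))"
        by (rule VT[OF s])
      show "?vt2 = \<i> * (\<i> * (- ?e)) * (\<i> * (- ?e)) * V s (- \<eta>) + \<i> * ?c * (V s (- \<eta>) + cnj (V s \<eta>))"
        using VT[OF s, of "- \<eta>"] by simp
      show "?At1 = \<i> * (\<i> * ?e * (\<i> * ?e * A s \<eta> - V s \<eta>) - \<i> * ?e * V s \<eta>) + \<i> * ?c * (A s \<eta> + cnj (A s (- \<eta>)))"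
        by (rule AT[OF s])
    qed (use s W1 W2 in auto)
    show "\<exists>d. ((\<lambda>r. ?W r \<eta>) has_vector_derivative d) (at s within {1..}) \<and>
        \<i> * d - complex_of_real (\<eta>\<^sup>2) * ?W s \<eta> + ?c * (?W s \<eta> + cnj (?W s (- \<eta>))) = 0"
      using dW eq by blast
  qed
qed


theorem proposition5p1:
  fixes a :: real and \<omega> \<omega>t \<omega>x \<omega>xx :: "real \<Rightarrow> real \<Rightarrow> complex" and t \<xi> :: real
  assumes a_pos: "a > 0"
    and deriv_t: "\<forall>s\<ge>1. \<forall>x. ((\<lambda>r. \<omega> r x) has_vector_derivative \<omega>t s x) (at s within {1..})"
    and deriv_x: "\<forall>s\<ge>1. \<forall>x. (\<omega> s has_vector_derivative \<omega>x s x) (at x)"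
    and deriv_xx: "\<forall>s\<ge>1. \<forall>x. (\<omega>x s has_vector_derivative \<omega>xx s x) (at x)"
    and eqn: "\<forall>s\<ge>1. \<forall>x. \<i> * \<omega>t s x + \<omega>xx s x
                + complex_of_real (a\<^sup>2 / (2 * s)) * (\<omega> s x + cnj (\<omega> s x)) = 0"
    and cont_t: "continuous_on ({1..} \<times> UNIV) (\<lambda>(s, x). \<omega>t s x)"
    and decay: "\<forall>T\<ge>1. \<exists>C. \<forall>s\<in>{1..T}. \<forall>x.
                  norm (\<omega> s x) + norm (\<omega>x s x) + norm (\<omega>xx s x) + norm (\<omega>t s x)
                    \<le> C / (1 + \<bar>x\<bar>) ^ 3"
    and t_ge: "t \<ge> 1"
    and xi_ne: "\<xi> \<noteq> 0"
  shows "fourier (Jop t (\<omega> t)) \<xi> =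
           sol_op_F a t (fourier (Jop 1 (\<omega> 1))) \<xi>
         + sol_op_F a t (\<lambda>\<eta>. complex_of_real (2 * a\<^sup>2 / \<eta>)
                              * fourier (\<lambda>x. complex_of_real (Re (\<omega> 1 x))) \<eta>) \<xi>
         - complex_of_real (2 * a\<^sup>2 / \<xi>) * fourier (\<lambda>x. complex_of_real (Re (\<omega> t x))) \<xi>"
  proof -
  let ?W = "\<lambda>r \<eta>. fourier (Jop r (\<omega> r)) \<eta>
            + complex_of_real (2 * a\<^sup>2 / \<eta>) * fourier (\<lambda>x. complex_of_real (Re (\<omega> r x))) \<eta>"
  have Wsol: "solves_fourier_eq a ?W"
    by (rule W_solves[OF deriv_t deriv_x deriv_xx eqn cont_t decay])
  obtain V1 where V1: "solves_fourier_eq a V1" "\<forall>\<eta>. V1 1 \<eta> = fourier (Jop 1 (\<omega> 1)) \<eta>"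
    using sol_exists by blast
  have V2: "solves_fourier_eq a (\<lambda>r \<eta>. ?W r \<eta> - V1 r \<eta>)"
    by (rule sol_diff[OF Wsol V1(1)])
  have s1: "sol_op_F a t (fourier (Jop 1 (\<omega> 1))) \<xi> = V1 t \<xi>"
    by (rule sol_op_eq[OF V1(1) _ t_ge]) (use V1(2) in auto)
  have s2: "sol_op_F a t (\<lambda>\<eta>. complex_of_real (2 * a\<^sup>2 / \<eta>)
                              * fourier (\<lambda>x. complex_of_real (Re (\<omega> 1 x))) \<eta>) \<xi> = ?W t \<xi> - V1 t \<xi>"
    by (rule sol_op_eq[OF V2 _ t_ge]) (use V1(2) in auto)
  show ?thesis unfolding s1 s2 by simp
qed

end
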